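(* Let $A$ be a C$^*$-algebra with cancellation. (1) If $p_1,q,p_2$ are projections in $A$ with $p_1\leq p_2$ and $p_1\lesssim q\lesssim p_2$, then there exists a projection $q'\in A$ with $q'\sim_{\mathrm{MvN}}q$ and $p_1\leq q'\leq p_2$. (2) Let $\{p_n\}_{n=1}^N$ and $\{q_m\}_{m=1}^M$ be increasing sequences of projections in $A$. If there exist integers $1\leq m_1<\cdots<m_N=M$ with $p_n\sim_{\mathrm{MvN}}q_{m_n}$ for all $1\leq n\leq N$, then there exists an increasing sequence $\{r_m\}_{m=1}^M$ of projections in $A$ such that $r_m\sim_{\mathrm{MvN}}q_m$ for all $1\leq m\leq M$ and $r_{m_n}=p_n$ for all $1\leq n\leq N$.
   Context: For projections $p,q$ in a C$^*$-algebra $A$: $p\leq q$ means $pq=qp=p$; $p\sim_{\mathrm{MvN}}q$ denotes Murray--von Neumann equivalence; $p\lesssim q$ means that there is a projection $p'\in A$ with $p'\sim_{\mathrm{MvN}}p$ and $p'\leq q$. A sequence of projections is increasing if it is increasing for $\leq$. $A$ has cancellation if for all projections $p,q$ in $\bigcup_{n\geq1}M_n(A)$, $[p]_0=[q]_0$ in $K_0(A)$ if and only if $p\sim_{\mathrm{MvN}}q$. *)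

theory Defs
  imports "HOL-Analysis.Analysis" "HOL-Library.Product_Plus"
begin

text \<open>A C*-algebra is modelled as a real Banach algebra type 'a (no unit required)
  together with a complex scalar multiplication sc (compatible with scaleR) and an
  involution st satisfying the C*-identity.\<close>

locale cstar_algebra =
  fixes sc :: "complex \<Rightarrow> 'a::{real_normed_algebra, banach} \<Rightarrow> 'a"
    and st :: "'a \<Rightarrow> 'a"
  assumes sc_add_right: "\<And>c x y. sc c (x + y) = sc c x + sc c y"
    and sc_add_left: "\<And>c d x. sc (c + d) x = sc c x + sc d x"
    and sc_sc: "\<And>c d x. sc c (sc d x) = sc (c * d) x"
    and sc_one: "\<And>x. sc 1 x = x"
    and sc_real: "\<And>r x. sc (complex_of_real r) x = scaleR r x"
    and norm_sc: "\<And>c x. norm (sc c x) = cmod c * norm x"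
    and sc_mult_left: "\<And>c x y. sc c (x * y) = sc c x * y"
    and sc_mult_right: "\<And>c x y. sc c (x * y) = x * sc c y"
    and st_add: "\<And>x y. st (x + y) = st x + st y"
    and st_sc: "\<And>c x. st (sc c x) = sc (cnj c) (st x)"
    and st_mult: "\<And>x y. st (x * y) = st y * st x"
    and st_st: "\<And>x. st (st x) = x"
    and cstar_identity: "\<And>x. norm (st x * x) = (norm x)\<^sup>2"

definition is_proj :: "('a::real_normed_algebra \<Rightarrow> 'a) \<Rightarrow> 'a \<Rightarrow> bool" where
  "is_proj st p \<longleftrightarrow> p * p = p \<and> st p = p"

definition proj_le :: "'a::real_normed_algebra \<Rightarrow> 'a \<Rightarrow> bool" where
  "proj_le p q \<longleftrightarrow> p * q = p \<and> q * p = p"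

definition mvn :: "('a::real_normed_algebra \<Rightarrow> 'a) \<Rightarrow> 'a \<Rightarrow> 'a \<Rightarrow> bool" where
  "mvn st p q \<longleftrightarrow> (\<exists>v. st v * v = p \<and> v * st v = q)"

definition proj_lesssim :: "('a::real_normed_algebra \<Rightarrow> 'a) \<Rightarrow> 'a \<Rightarrow> 'a \<Rightarrow> bool" where
  "proj_lesssim st p q \<longleftrightarrow> (\<exists>p'. is_proj st p' \<and> mvn st p' p \<and> proj_le p' q)"

section \<open>Matrices: elements of M_infinity(B) as finitely supported nat x nat matrices\<close>

definition fin_mat :: "nat \<Rightarrow> (nat \<Rightarrow> nat \<Rightarrow> 'b::zero) \<Rightarrow> bool" where
  "fin_mat n X \<longleftrightarrow> (\<forall>i j. (n \<le> i \<or> n \<le> j) \<longrightarrow> X i j = 0)"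

definition mmul :: "('b \<Rightarrow> 'b \<Rightarrow> 'b) \<Rightarrow> nat \<Rightarrow> (nat \<Rightarrow> nat \<Rightarrow> 'b::comm_monoid_add)
    \<Rightarrow> (nat \<Rightarrow> nat \<Rightarrow> 'b) \<Rightarrow> (nat \<Rightarrow> nat \<Rightarrow> 'b)" where
  "mmul mul n X Y = (\<lambda>i j. \<Sum>k<n. mul (X i k) (Y k j))"

definition mstar :: "('b \<Rightarrow> 'b) \<Rightarrow> (nat \<Rightarrow> nat \<Rightarrow> 'b) \<Rightarrow> (nat \<Rightarrow> nat \<Rightarrow> 'b)" where
  "mstar s X = (\<lambda>i j. s (X j i))"

definition mat_proj :: "('b \<Rightarrow> 'b \<Rightarrow> 'b) \<Rightarrow> ('b \<Rightarrow> 'b) \<Rightarrow> nat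
    \<Rightarrow> (nat \<Rightarrow> nat \<Rightarrow> 'b::comm_monoid_add) \<Rightarrow> bool" where
  "mat_proj mul s n P \<longleftrightarrow> fin_mat n P \<and> mmul mul n P P = P \<and> mstar s P = P"

definition mat_mvn :: "('b \<Rightarrow> 'b \<Rightarrow> 'b) \<Rightarrow> ('b \<Rightarrow> 'b) \<Rightarrow> nat
    \<Rightarrow> (nat \<Rightarrow> nat \<Rightarrow> 'b::comm_monoid_add) \<Rightarrow> (nat \<Rightarrow> nat \<Rightarrow> 'b) \<Rightarrow> bool" where
  "mat_mvn mul s n P Q \<longleftrightarrow> (\<exists>V. fin_mat n V \<and> mmul mul n (mstar s V) V = P
                                   \<and> mmul mul n V (mstar s V) = Q)"

definition dsum :: "nat \<Rightarrow> (nat \<Rightarrow> nat \<Rightarrow> 'b::zero) \<Rightarrow> (nat \<Rightarrow> nat \<Rightarrow> 'b) \<Rightarrow> (nat \<Rightarrow> nat \<Rightarrow> 'b)" where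
  "dsum n P R = (\<lambda>i j. if i < n \<and> j < n then P i j
                       else if n \<le> i \<and> n \<le> j then R (i - n) (j - n) else 0)"

text \<open>The unitization of A: pairs (lambda, a) with
  (l,a)(m,b) = (l m, l b + m a + a b) and (l,a)* = (cnj l, a*).\<close>
definition umult :: "(complex \<Rightarrow> 'a \<Rightarrow> 'a) \<Rightarrow> complex \<times> 'a::real_normed_algebra
    \<Rightarrow> complex \<times> 'a \<Rightarrow> complex \<times> 'a" where
  "umult sc x y = (fst x * fst y, sc (fst x) (snd y) + sc (fst y) (snd x) + snd x * snd y)"

definition ustar :: "('a \<Rightarrow> 'a) \<Rightarrow> complex \<times> 'a \<Rightarrow> complex \<times> 'a" where
  "ustar st x = (cnj (fst x), st (snd x))"

definition uemb :: "(nat \<Rightarrow> nat \<Rightarrow> 'a) \<Rightarrow> (nat \<Rightarrow> nat \<Rightarrow> complex \<times> 'a)" where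
  "uemb P = (\<lambda>i j. (0, P i j))"

text \<open>Equality of K_0 classes [P]_0 = [Q]_0 for projections P, Q in M_infinity(A):
  K_0(A) sits injectively in K_0 of the unitization, which is the Grothendieck group of
  the semigroup of MvN classes of projections of M_infinity(unitization); equality of
  Grothendieck classes means P + R ~ Q + R (direct sum) for some projection R.\<close>
definition k0_eq :: "(complex \<Rightarrow> 'a \<Rightarrow> 'a) \<Rightarrow> ('a \<Rightarrow> 'a) \<Rightarrow>
    (nat \<Rightarrow> nat \<Rightarrow> 'a::real_normed_algebra) \<Rightarrow> (nat \<Rightarrow> nat \<Rightarrow> 'a) \<Rightarrow> bool" where
  "k0_eq sc st P Q \<longleftrightarrow> (\<exists>n k R. fin_mat n P \<and> fin_mat n Q
       \<and> mat_proj (umult sc) (ustar st) k R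
       \<and> mat_mvn (umult sc) (ustar st) (n + k) (dsum n (uemb P) R) (dsum n (uemb Q) R))"

definition has_cancellation :: "(complex \<Rightarrow> 'a::real_normed_algebra \<Rightarrow> 'a) \<Rightarrow> ('a \<Rightarrow> 'a) \<Rightarrow> bool" where
  "has_cancellation sc st \<longleftrightarrow>
     (\<forall>n P Q. mat_proj (*) st n P \<and> mat_proj (*) st n Q \<longrightarrow>
        (k0_eq sc st P Q \<longleftrightarrow> mat_mvn (*) st n P Q))"

definition incr_seq :: "('a::real_normed_algebra \<Rightarrow> 'a) \<Rightarrow> nat \<Rightarrow> (nat \<Rightarrow> 'a) \<Rightarrow> bool" where
  "incr_seq st N p \<longleftrightarrow> (\<forall>n\<in>{1..N}. is_proj st (p n))
                        \<and> (\<forall>n. 1 \<le> n \<and> n < N \<longrightarrow> proj_le (p n) (p (Suc n)))"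

end

theory Submission
  imports Defs
begin

lemma ar: "x * y = (z::'a::semigroup_mult) \<Longrightarrow> x * (y * w) = z * w"
  by (metis mult.assoc)

context cstar_algebra begin

lemma st_zero[simp]: "st 0 = 0"
  using st_add[of 0 0] by simp

lemma st_minus: "st (- x) = - st x"
  using st_add[of x "-x"] by (metis add.commute add_cancel_left_left add_right_imp_eq neg_eq_iff_add_eq_0 st_add)

lemma st_diff: "st (x - y) = st x - st y"
  using st_add[of x "-y"] st_minus[of y] by simp

lemma sc_zero[simp]: "sc 0 x = 0"
  using sc_real[of 0 x] by simp

lemma zero_if_st: "st x * x = 0 \<Longrightarrow> x = 0"
  using cstar_identity[of x] by simp

lemma pi_right:
  assumes "st v * v = p" "p * p = p"
  shows "v * p = v"
proof -
  have sp: "st p = p" using assms(1) st_mult[of "st v" v] st_st by simp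
  have "st (v - v * p) * (v - v * p) = (st v * v) - (st v * v) * p - p * (st v * v) + p * (st v * v) * p"
    by (simp add: st_diff st_mult sp algebra_simps)
  also have "... = 0" using assms by (simp add: mult.assoc)
  finally have "v - v * p = 0" by (rule zero_if_st)
  then show ?thesis by simp
qed

lemma pi_left:
  assumes "v * st v = q" "q * q = q"
  shows "q * v = v"
proof -
  have "st (st v) * st v = q" using assms st_st by simp
  from pi_right[OF this assms(2)] have "st v * q = st v" .
  then have "st (st v * q) = st (st v)" by simp
  moreover have "st q = q" using assms(1) st_mult[of v "st v"] st_st by simp
  ultimately show ?thesis by (simp add: st_mult st_st)
qed


lemma umult_emb[simp]: "umult sc (0,x) (0,y) = (0, x*y)"
  by (simp add: umult_def)

lemma mmul_uemb: "mmul (umult sc) n (uemb X) (uemb Y) = uemb (mmul (*) n X Y)"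
  by (simp add: mmul_def uemb_def sum_prod)

lemma mstar_uemb: "mstar (ustar st) (uemb X) = uemb (mstar st X)"
  by (simp add: mstar_def uemb_def ustar_def)

lemma dsum_uemb: "dsum n (uemb X) (uemb Y) = uemb (dsum n X Y)"
  unfolding dsum_def uemb_def by (intro ext) (simp add: zero_prod_def)


lemma fin_uemb: "fin_mat n (uemb X) = fin_mat n X"
  by (simp add: fin_mat_def uemb_def zero_prod_def)

definition e1 :: "'a \<Rightarrow> nat \<Rightarrow> nat \<Rightarrow> 'a" where
  "e1 x = (\<lambda>i j. if i = 0 \<and> j = 0 then x else 0)"

lemma dsum_e1: "dsum 1 (e1 a) (e1 b) = (\<lambda>i j. if i=0 \<and> j=0 then a else if i=1 \<and> j=1 then b else 0)"
  by (auto simp add: dsum_def e1_def fun_eq_iff)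

lemma proj_e1: "is_proj st x \<Longrightarrow> mat_proj (*) st 1 (e1 x)"
  by (auto simp add: mat_proj_def is_proj_def fin_mat_def mmul_def mstar_def e1_def fun_eq_iff)

lemma sum2: "(\<Sum>k<2. f k) = f 0 + f (1::nat)"
  by (simp add: numeral_2_eq_2)

lemma cancel_use:
  assumes canc: "has_cancellation sc st"
    and pa: "is_proj st a" and pb: "is_proj st b" and pc: "is_proj st c" and pd: "is_proj st d"
    and ab: "a * b = 0" "b * a = 0" and cd: "c * d = 0" "d * c = 0"
    and sum: "a + b = c + d"
    and w1: "st w * w = d" and w2: "w * st w = b"
  shows "\<exists>w0. st w0 * w0 = a \<and> w0 * st w0 = c"
proof -
  have aa: "a * a = a" "st a = a" using pa by (auto simp: is_proj_def)
  have bb: "b * b = b" "st b = b" using pb by (auto simp: is_proj_def)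
  have cc: "c * c = c" "st c = c" using pc by (auto simp: is_proj_def)
  have dd: "d * d = d" "st d = d" using pd by (auto simp: is_proj_def)
  have wd: "w * d = w" using pi_right[OF w1 dd(1)] .
  have dw: "d * st w = st w" using wd st_mult[of w d] dd(2) by simp
  define V :: "nat \<Rightarrow> nat \<Rightarrow> 'a" where "V = (\<lambda>i j. if i=0 \<and> j=0 then c*a else if i=0 \<and> j=1 then c*b
      else if i=1 \<and> j=0 then w*a else if i=1 \<and> j=1 then w*b else (0::'a))"
  have wc: "w * c = 0" using wd cd(2) by (metis ar mult_zero_right)
  have cw: "c * st w = 0" using dw cd(1) by (metis mult.assoc mult_zero_left)
  have e00: "a * (c * a) + a * (d * a) = a"
  proof -
    have "a * (c * a) + a * (d * a) = a * ((c + d) * a)" by (simp add: distrib_left distrib_right)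
    also have "... = a * ((a + b) * a)" by (simp add: sum)
    also have "... = a" by (simp add: distrib_right aa ab bb cc cd dw cw wc w2 wd)
    finally show ?thesis .
  qed
  have e01: "a * (c * b) + a * (d * b) = 0"
  proof -
    have "a * (c * b) + a * (d * b) = a * ((c + d) * b)" by (simp add: distrib_left distrib_right)
    also have "... = a * ((a + b) * b)" by (simp add: sum)
    also have "... = 0" by (simp add: distrib_right aa ab bb cc cd dw cw wc w2 wd)
    finally show ?thesis .
  qed
  have e10: "b * (c * a) + b * (d * a) = 0"
  proof -
    have "b * (c * a) + b * (d * a) = b * ((c + d) * a)" by (simp add: distrib_left distrib_right)
    also have "... = b * ((a + b) * a)" by (simp add: sum)
    also have "... = 0" by (simp add: distrib_right aa ab bb cc cd dw cw wc w2 wd)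
    finally show ?thesis .
  qed
  have e11: "b * (c * b) + b * (d * b) = b"
  proof -
    have "b * (c * b) + b * (d * b) = b * ((c + d) * b)" by (simp add: distrib_left distrib_right)
    also have "... = b * ((a + b) * b)" by (simp add: sum)
    also have "... = b" by (simp add: distrib_right aa ab bb cc cd dw cw wc w2 wd)
    finally show ?thesis .
  qed
  have f00: "c * (a * c) + c * (b * c) = c"
  proof -
    have "c * (a * c) + c * (b * c) = c * ((a + b) * c)" by (simp add: distrib_left distrib_right)
    also have "... = c * ((c + d) * c)" by (simp add: sum)
    also have "... = c" by (simp add: distrib_right aa ab bb cc cd dw cw wc w2 wd)
    finally show ?thesis .
  qed
  have f01: "c * (a * st w) + c * (b * st w) = 0"
  proof -
    have "c * (a * st w) + c * (b * st w) = c * ((a + b) * st w)" by (simp add: distrib_left distrib_right)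
    also have "... = c * ((c + d) * st w)" by (simp add: sum)
    also have "... = 0" by (simp add: distrib_right aa ab bb cc cd dw cw wc w2 wd)
    finally show ?thesis .
  qed
  have f10: "w * (a * c) + w * (b * c) = 0"
  proof -
    have "w * (a * c) + w * (b * c) = w * ((a + b) * c)" by (simp add: distrib_left distrib_right)
    also have "... = w * ((c + d) * c)" by (simp add: sum)
    also have "... = 0" by (simp add: distrib_right aa ab bb cc cd dw cw wc w2 wd)
    finally show ?thesis .
  qed
  have f11: "w * (a * st w) + w * (b * st w) = b"
  proof -
    have "w * (a * st w) + w * (b * st w) = w * ((a + b) * st w)" by (simp add: distrib_left distrib_right)
    also have "... = w * ((c + d) * st w)" by (simp add: sum)
    also have "... = b" by (simp add: distrib_right aa ab bb cc cd dw cw wc w2 wd)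
    finally show ?thesis .
  qed
  have m1: "mmul (*) 2 (mstar st V) V = dsum 1 (e1 a) (e1 b)"
  proof -
    have x00: "st (c*a) * (c*a) + st (w*a) * (w*a) = a"
      using e00 by (simp add: st_mult aa cc mult.assoc ar[OF cc(1)] ar[OF w1])
    have x01: "st (c*a) * (c*b) + st (w*a) * (w*b) = 0"
      using e01 by (simp add: st_mult aa cc mult.assoc ar[OF cc(1)] ar[OF w1])
    have x10: "st (c*b) * (c*a) + st (w*b) * (w*a) = 0"
      using e10 by (simp add: st_mult bb cc mult.assoc ar[OF cc(1)] ar[OF w1])
    have x11: "st (c*b) * (c*b) + st (w*b) * (w*b) = b"
      using e11 by (simp add: st_mult bb cc mult.assoc ar[OF cc(1)] ar[OF w1])
    show ?thesis
      unfolding dsum_e1 mmul_def mstar_def sum2 fun_eq_iff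
    proof (intro allI)
      fix i j :: nat
      show "st (V 0 i) * V 0 j + st (V 1 i) * V 1 j = (if i=0 \<and> j=0 then a else if i=1 \<and> j=1 then b else 0)"
        using x00 x01 x10 x11 by (cases "i = 0"; cases "i = 1"; cases "j = 0"; cases "j = 1") (simp_all add: V_def)
    qed
  qed
  have m2: "mmul (*) 2 V (mstar st V) = dsum 1 (e1 c) (e1 b)"
  proof -
    have x00: "(c*a) * st (c*a) + (c*b) * st (c*b) = c"
      using f00 by (simp add: st_mult aa bb cc mult.assoc ar[OF aa(1)] ar[OF bb(1)])
    have x01: "(c*a) * st (w*a) + (c*b) * st (w*b) = 0"
      using f01 by (simp add: st_mult aa bb mult.assoc ar[OF aa(1)] ar[OF bb(1)])
    have x10: "(w*a) * st (c*a) + (w*b) * st (c*b) = 0"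
      using f10 by (simp add: st_mult aa bb cc mult.assoc ar[OF aa(1)] ar[OF bb(1)])
    have x11: "(w*a) * st (w*a) + (w*b) * st (w*b) = b"
      using f11 by (simp add: st_mult aa bb mult.assoc ar[OF aa(1)] ar[OF bb(1)])
    show ?thesis
      unfolding dsum_e1 mmul_def mstar_def sum2 fun_eq_iff
    proof (intro allI)
      fix i j :: nat
      show "V i 0 * st (V j 0) + V i 1 * st (V j 1) = (if i=0 \<and> j=0 then c else if i=1 \<and> j=1 then b else 0)"
        using x00 x01 x10 x11 by (cases "i = 0"; cases "i = 1"; cases "j = 0"; cases "j = 1") (simp_all add: V_def)
    qed
  qed
  have finV: "fin_mat 2 V" by (auto simp: fin_mat_def V_def)
  have "k0_eq sc st (e1 a) (e1 c)"
    unfolding k0_eq_def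
  proof (intro exI conjI)
    show "fin_mat 1 (e1 a)" "fin_mat 1 (e1 c)" by (auto simp: fin_mat_def e1_def)
    show "mat_proj (umult sc) (ustar st) 1 (uemb (e1 b))"
      using proj_e1[OF pb] by (simp add: mat_proj_def mmul_uemb mstar_uemb fin_uemb)
    show "mat_mvn (umult sc) (ustar st) (1 + 1) (dsum 1 (uemb (e1 a)) (uemb (e1 b))) (dsum 1 (uemb (e1 c)) (uemb (e1 b)))"
      unfolding mat_mvn_def
      unfolding one_add_one
      by (rule exI[of _ "uemb V"])
        (simp only: fin_uemb mmul_uemb mstar_uemb dsum_uemb m1 m2 finV simp_thms)
  qed
  then have "mat_mvn (*) st 1 (e1 a) (e1 c)"
    using canc proj_e1[OF pa] proj_e1[OF pc] unfolding has_cancellation_def by blast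
  then obtain U where "mmul (*) 1 (mstar st U) U = e1 a" "mmul (*) 1 U (mstar st U) = e1 c"
    unfolding mat_mvn_def by blast
  then have "mmul (*) 1 (mstar st U) U 0 0 = a" "mmul (*) 1 U (mstar st U) 0 0 = c"
    by (simp_all add: e1_def)
  then have "st (U 0 0) * U 0 0 = a" "U 0 0 * st (U 0 0) = c"
    by (simp_all add: mmul_def mstar_def)
  then show ?thesis by blast
qed


lemma proj_diff:
  assumes "is_proj st p" "is_proj st r" "p * r = r" "r * p = r"
  shows "is_proj st (p - r)" "(p - r) * r = 0" "r * (p - r) = 0"
proof -
  have P: "p * p = p" "st p = p" "r * r = r" "st r = r" using assms(1,2) by (auto simp: is_proj_def)
  have "(p - r) * (p - r) = p * p - p * r - (r * p - r * r)" by (simp add: left_diff_distrib right_diff_distrib)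
  also have "... = p - r" using P assms(3,4) by simp
  finally show "is_proj st (p - r)" unfolding is_proj_def using P by (simp add: st_diff)
  show "(p - r) * r = 0" using P assms(3) by (simp add: left_diff_distrib)
  show "r * (p - r) = 0" using P assms(4) by (simp add: right_diff_distrib)
qed

lemma part1:
  assumes canc: "has_cancellation sc st"
    and pp1: "is_proj st p1" and pq: "is_proj st q" and pp2: "is_proj st p2"
    and le12: "proj_le p1 p2" and l1: "proj_lesssim st p1 q" and l2: "proj_lesssim st q p2"
  shows "\<exists>q'. is_proj st q' \<and> mvn st q' q \<and> proj_le p1 q' \<and> proj_le q' p2"
proof -
  obtain q2 y where pq2: "is_proj st q2" and y1: "st y * y = q2" and y2: "y * st y = q"
      and le2: "proj_le q2 p2"
    using l2 unfolding proj_lesssim_def mvn_def by blast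
  obtain p1' s where pp1': "is_proj st p1'" and s1: "st s * s = p1'" and s2: "s * st s = p1"
      and le1: "proj_le p1' q"
    using l1 unfolding proj_lesssim_def mvn_def by blast
  have P1: "p1 * p1 = p1" "st p1 = p1" using pp1 by (auto simp: is_proj_def)
  have P2: "p2 * p2 = p2" "st p2 = p2" using pp2 by (auto simp: is_proj_def)
  have Q: "q * q = q" "st q = q" using pq by (auto simp: is_proj_def)
  have Q2: "q2 * q2 = q2" "st q2 = q2" using pq2 by (auto simp: is_proj_def)
  have P1': "p1' * p1' = p1'" "st p1' = p1'" using pp1' by (auto simp: is_proj_def)
  have L12: "p1 * p2 = p1" "p2 * p1 = p1" using le12 by (auto simp: proj_le_def)
  have L2: "q2 * p2 = q2" "p2 * q2 = q2" using le2 by (auto simp: proj_le_def)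
  have L1: "p1' * q = p1'" "q * p1' = p1'" using le1 by (auto simp: proj_le_def)
  have yq2: "y * q2 = y" using pi_right[OF y1 Q2(1)] .
  have qy: "q * y = y" using pi_left[OF y2 Q(1)] .
  have syq: "st y * q = st y" using arg_cong[OF qy, of st] by (simp add: st_mult Q)
  have q2sy: "q2 * st y = st y" using arg_cong[OF yq2, of st] by (simp add: st_mult Q2)
  have sp1': "s * p1' = s" using pi_right[OF s1 P1'(1)] .
  have p1s: "p1 * s = s" using pi_left[OF s2 P1(1)] .
  have sq: "s * q = s" by (metis L1(1) mult.assoc sp1')
  define d where "d = st y * (p1' * y)"
  define t where "t = st y * st s"
  have stt: "st t = s * y" by (simp add: t_def st_mult st_st)
  have t1: "st t * t = p1" unfolding stt
    by (simp add: t_def mult.assoc ar[OF y2] ar[OF sq] s2)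
  have t2: "t * st t = d" unfolding stt
    by (simp add: t_def d_def mult.assoc ar[OF s1])
  have D: "d * d = d" "st d = d"
    unfolding d_def by (simp_all add: mult.assoc ar[OF y2] ar[OF L1(1)] ar[OF P1'(1)] st_mult st_st P1')
  have dq2: "d * q2 = d" "q2 * d = d"
    unfolding d_def by (simp_all add: mult.assoc yq2 ar[OF q2sy])
  have dp2: "d * p2 = d" "p2 * d = d"
    using dq2 L2 by (metis mult.assoc)+
  have pd: "is_proj st d" using D by (simp add: is_proj_def)
  have A: "is_proj st (p2 - p1)" "(p2 - p1) * p1 = 0" "p1 * (p2 - p1) = 0"
    using proj_diff[OF pp2 pp1 L12(2) L12(1)] by auto
  have C: "is_proj st (p2 - d)" "(p2 - d) * d = 0" "d * (p2 - d) = 0"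
    using proj_diff[OF pp2 pd dp2(2) dp2(1)] by auto
  have w1: "st (st t) * st t = d" using t2 by (simp add: st_st)
  have w2: "st t * st (st t) = p1" using t1 by (simp add: st_st)
  obtain w0 where w01: "st w0 * w0 = p2 - p1" and w02: "w0 * st w0 = p2 - d"
    using cancel_use[OF canc A(1) pp1 C(1) pd A(2) A(3) C(2) C(3) _ w1 w2] by auto
  have w0a: "w0 * (p2 - p1) = w0" using pi_right[OF w01] A(1) by (simp add: is_proj_def)
  have cw0: "(p2 - d) * w0 = w0" using pi_left[OF w02] C(1) by (simp add: is_proj_def)
  have w0p1: "w0 * p1 = 0" by (metis A(2) mult.assoc mult_zero_right w0a)
  have p1w0: "p1 * st w0 = 0" using arg_cong[OF w0p1, of st] by (simp add: st_mult P1)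
  have w0p2: "w0 * p2 = w0"
  proof -
    have "(p2 - p1) * p2 = p2 - p1" using L12 P2 by (simp add: algebra_simps)
    then show ?thesis by (metis mult.assoc w0a)
  qed
  have p2w0: "p2 * st w0 = st w0" using arg_cong[OF w0p2, of st] by (simp add: st_mult P2)
  define f where "f = q2 - d"
  have F: "is_proj st f" "f * d = 0" "d * f = 0"
    unfolding f_def using proj_diff[OF pq2 pd dq2(2) dq2(1)] by auto
  have FF: "f * f = f" "st f = f" using F(1) by (auto simp: is_proj_def)
  have fc: "f * (p2 - d) = f" unfolding f_def
    using L2 dq2 D dp2 by (simp add: algebra_simps)
  define e where "e = st w0 * (f * w0)"
  have E: "e * e = e" "st e = e"
    unfolding e_def by (simp_all add: mult.assoc ar[OF w02] ar[OF fc] ar[OF FF(1)] st_mult st_st FF)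
  have p1e: "p1 * e = 0" "e * p1 = 0"
    unfolding e_def by (simp_all add: mult.assoc ar[OF p1w0] w0p1)
  have p2e: "p2 * e = e" "e * p2 = e"
    unfolding e_def by (simp_all add: mult.assoc ar[OF p2w0] w0p2)
  define x where "x = t + f * w0"
  have sx: "st x = st t + st w0 * f" by (simp add: x_def st_add st_mult FF)
  have tp1: "t * p1 = t" using pi_right[OF t1 P1(1)] .
  have dt: "d * t = t" using pi_left[OF t2 D(1)] .
  have sttd: "st t * d = st t" using arg_cong[OF dt, of st] by (simp add: st_mult D)
  have sttf: "st t * f = 0" by (metis F(3) mult.assoc mult_zero_right sttd)
  have ft: "f * t = 0" using arg_cong[OF sttf, of st] by (simp add: st_mult st_st FF)
  have tsw0: "t * st w0 = 0" by (metis mult.assoc mult_zero_right p1w0 tp1)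
  have w0st: "w0 * st t = 0" using arg_cong[OF tsw0, of st] by (simp add: st_mult st_st)
  have x1: "st x * x = p1 + e"
    unfolding sx
    by (simp add: x_def e_def algebra_simps t1 ar[OF sttf] ft ar[OF FF(1)])
  have x2: "x * st x = q2"
  proof -
    have "x * st x = t * st t + t * (st w0 * f) + f * (w0 * st t) + f * (w0 * (st w0 * f))"
      unfolding sx by (simp add: x_def algebra_simps)
    also have "... = d + f" by (simp add: t2 ar[OF tsw0] w0st ar[OF w02] ar[OF fc] FF)
    also have "... = q2" by (simp add: f_def)
    finally show ?thesis .
  qed
  have q2x: "q2 * x = x" using pi_left[OF x2 Q2(1)] .
  have sxq2: "st x * q2 = st x" using arg_cong[OF q2x, of st] by (simp add: st_mult Q2)
  have mv: "mvn st (p1 + e) q"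
    unfolding mvn_def
  proof (rule exI[of _ "y * x"])
    show "st (y * x) * (y * x) = p1 + e \<and> y * x * st (y * x) = q"
      by (simp add: st_mult mult.assoc ar[OF y1] q2x x1 ar[OF x2] ar[OF yq2] y2)
  qed
  show ?thesis
  proof (intro exI conjI)
    show "is_proj st (p1 + e)" unfolding is_proj_def
      by (simp add: algebra_simps P1 E p1e st_add)
    show "mvn st (p1 + e) q" by (rule mv)
    show "proj_le p1 (p1 + e)" unfolding proj_le_def by (simp add: algebra_simps P1 p1e)
    show "proj_le (p1 + e) p2" unfolding proj_le_def by (simp add: algebra_simps L12 p2e)
  qed
qed


lemma transport:
  assumes pa: "is_proj st a" and le: "proj_le a Q" and v1: "st v * v = P" and v2: "v * st v = Q"
    and pP: "is_proj st P"
  shows "proj_lesssim st a P"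
proof -
  have A: "a * a = a" "st a = a" using pa by (auto simp: is_proj_def)
  have PP: "P * P = P" "st P = P" using pP by (auto simp: is_proj_def)
  have L: "a * Q = a" "Q * a = a" using le by (auto simp: proj_le_def)
  have vP: "v * P = v" using pi_right[OF v1 PP(1)] .
  have Psv: "P * st v = st v" using arg_cong[OF vP, of st] by (simp add: st_mult PP)
  show ?thesis unfolding proj_lesssim_def
  proof (intro exI conjI)
    show "is_proj st (st v * (a * v))" unfolding is_proj_def
      by (simp add: mult.assoc ar[OF v2] ar[OF L(1)] ar[OF A(1)] st_mult st_st A)
    show "mvn st (st v * (a * v)) a" unfolding mvn_def
      by (rule exI[of _ "a * v"]) (simp add: mult.assoc st_mult A ar[OF A(1)] ar[OF v2] L)
    show "proj_le (st v * (a * v)) P" unfolding proj_le_def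
      by (simp add: mult.assoc vP ar[OF Psv])
  qed
qed

end

lemma proj_le_trans: "proj_le (a::'a::real_normed_algebra) b \<Longrightarrow> proj_le b c \<Longrightarrow> proj_le a c"
  unfolding proj_le_def by (metis mult.assoc)

lemma proj_le_refl: "is_proj st a \<Longrightarrow> proj_le a a"
  unfolding proj_le_def is_proj_def by simp

lemma proj_le_zero: "proj_le 0 (a::'a::real_normed_algebra)"
  unfolding proj_le_def by simp

lemma m_strict:
  assumes "\<forall>n. 1 \<le> n \<and> n < N \<longrightarrow> (m::nat\<Rightarrow>nat) n < m (Suc n)"
  shows "1 \<le> i \<Longrightarrow> i < j \<Longrightarrow> j \<le> N \<Longrightarrow> m i < m j"
proof (induction j)
  case 0 then show ?case by simp
next
  case (Suc j)
  then show ?case using assms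
    by (metis Suc_le_lessD le_less_trans less_Suc_eq order_trans less_imp_le_nat)
qed

lemma chain_le:
  assumes "incr_seq st N p"
  shows "1 \<le> i \<Longrightarrow> i \<le> j \<Longrightarrow> j \<le> N \<Longrightarrow> proj_le (p i) (p j)"
proof (induction j)
  case 0 then show ?case by simp
next
  case (Suc j)
  show ?case
  proof (cases "i = Suc j")
    case True then show ?thesis using assms Suc.prems unfolding incr_seq_def
      by (auto intro: proj_le_refl)
  next
    case False
    then have "proj_le (p i) (p j)" using Suc by simp
    moreover have "proj_le (p j) (p (Suc j))" using assms Suc.prems False unfolding incr_seq_def by auto
    ultimately show ?thesis by (rule proj_le_trans)
  qed
qed

primrec rseq :: "('a::real_normed_algebra \<Rightarrow> 'a) \<Rightarrow> (nat \<Rightarrow> 'a) \<Rightarrow> (nat \<Rightarrow> 'a) \<Rightarrow> (nat \<Rightarrow> nat) \<Rightarrow> nat \<Rightarrow> 'a" where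
  "rseq st p q m 0 = 0"
| "rseq st p q m (Suc k) = (let j = (LEAST j. 1 \<le> j \<and> Suc k \<le> m j) in
     if m j = Suc k then p j else
     (SOME q'. is_proj st q' \<and> mvn st q' (q (Suc k)) \<and> proj_le (rseq st p q m k) q' \<and> proj_le q' (p j)))"


context cstar_algebra begin

lemma mvn_sym: "mvn st a b \<Longrightarrow> mvn st b a"
  unfolding mvn_def by (metis st_st)

lemma part2:
  assumes canc: "has_cancellation sc st"
    and ip: "incr_seq st N p" and iq: "incr_seq st M q" and N1: "1 \<le> N" and m1: "1 \<le> m 1"
    and ms: "\<forall>n. 1 \<le> n \<and> n < N \<longrightarrow> m n < m (Suc n)" and mN: "m N = M"
    and eq: "\<forall>n\<in>{1..N}. mvn st (p n) (q (m n))"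
  shows "\<exists>r. incr_seq st M r \<and> (\<forall>k\<in>{1..M}. mvn st (r k) (q k)) \<and> (\<forall>n\<in>{1..N}. r (m n) = p n)"
proof -
  define J where "J k = (LEAST j. 1 \<le> j \<and> k \<le> m j)" for k
  define r where "r = rseq st p q m"
  have mle: "m i \<le> m j" if "1 \<le> i" "i \<le> j" "j \<le> N" for i j
    using m_strict[OF ms, of i j] that by (cases "i = j") auto
  have mge: "1 \<le> m n" "m n \<le> M" if "n \<in> {1..N}" for n
    using mle[of 1 n] mle[of n N] that m1 mN N1 by auto
  have Jp: "1 \<le> J k \<and> J k \<le> N \<and> k \<le> m (J k)" if "k \<le> M" for k
  proof -
    have w: "1 \<le> N \<and> k \<le> m N" using N1 mN that by simp
    show ?thesis unfolding J_def
      using LeastI[of "\<lambda>j. 1 \<le> j \<and> k \<le> m j", OF w] Least_le[of "\<lambda>j. 1 \<le> j \<and> k \<le> m j", OF w]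
      by auto
  qed
  have Jmono: "J k \<le> J k'" if "k \<le> k'" "k' \<le> M" for k k'
  proof -
    have "1 \<le> J k' \<and> k \<le> m (J k')" using Jp[OF that(2)] that(1) by auto
    then show ?thesis unfolding J_def by (rule Least_le)
  qed
  have Jm: "J (m n) = n" if n: "n \<in> {1..N}" for n
    unfolding J_def
  proof (rule Least_equality)
    show "1 \<le> n \<and> m n \<le> m n" using n by simp
    fix y assume y: "1 \<le> y \<and> m n \<le> m y"
    show "n \<le> y"
    proof (rule ccontr)
      assume "\<not> n \<le> y"
      then have "m y < m n" using m_strict[OF ms, of y n] y n by auto
      then show False using y by simp
    qed
  qed
  have rSuc: "r (Suc k) = (if m (J (Suc k)) = Suc k then p (J (Suc k)) else
     (SOME q'. is_proj st q' \<and> mvn st q' (q (Suc k)) \<and> proj_le (r k) q' \<and> proj_le q' (p (J (Suc k)))))" for k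
    by (simp add: r_def J_def Let_def)
  have r0: "r 0 = 0" by (simp add: r_def)
  have pz: "is_proj st 0" by (simp add: is_proj_def)
  have pp: "is_proj st (p n)" if "n \<in> {1..N}" for n using ip that by (simp add: incr_seq_def)
  have pq: "is_proj st (q n)" if "n \<in> {1..M}" for n using iq that by (simp add: incr_seq_def)
  have inv: "k \<le> M \<Longrightarrow> is_proj st (r k) \<and> (1 \<le> k \<longrightarrow> mvn st (r k) (q k)
      \<and> proj_le (r k) (p (J k)) \<and> proj_le (r (k - 1)) (r k))" for k
  proof (induction k)
    case 0 then show ?case using r0 pz by simp
  next
    case (Suc k)
    define j where "j = J (Suc k)"
    have j: "1 \<le> j" "j \<le> N" "Suc k \<le> m j" using Jp[OF Suc.prems] by (auto simp: j_def)
    have IH: "is_proj st (r k)" "1 \<le> k \<Longrightarrow> mvn st (r k) (q k) \<and> proj_le (r k) (p (J k))"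
      using Suc by auto
    have rk_le: "proj_le (r k) (p j)"
    proof (cases "k = 0")
      case True then show ?thesis using r0 proj_le_zero by simp
    next
      case False
      then have "proj_le (r k) (p (J k))" using IH by simp
      moreover have "proj_le (p (J k)) (p j)"
        using chain_le[OF ip, of "J k" j] Jp[of k] Jmono[of k "Suc k"] Suc.prems j
        unfolding j_def by simp
      ultimately show ?thesis by (rule proj_le_trans)
    qed
    show ?case
    proof (cases "m j = Suc k")
      case True
      then have rs: "r (Suc k) = p j" using rSuc[of k] by (simp add: j_def)
      have "mvn st (p j) (q (m j))" using eq j by auto
      then show ?thesis using rs rk_le pp[of j] j True proj_le_refl[of st "p j"] by (auto simp: j_def)
    next
      case False
      then have rs: "r (Suc k) = (SOME q'. is_proj st q' \<and> mvn st q' (q (Suc k)) \<and> proj_le (r k) q' \<and> proj_le q' (p j))"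
        using rSuc[of k] by (simp add: j_def)
      have ls1: "proj_lesssim st (r k) (q (Suc k))"
      proof (cases "k = 0")
        case True then show ?thesis unfolding proj_lesssim_def using r0 pz
          by (auto intro!: exI[of _ 0] simp: mvn_def proj_le_zero)
      next
        case False
        then show ?thesis unfolding proj_lesssim_def
          using IH pq[of k] Suc.prems iq mvn_sym[of "r k" "q k"]
          by (intro exI[of _ "q k"]) (auto simp: incr_seq_def)
      qed
      have "mvn st (p j) (q (m j))" using eq j by auto
      then obtain v where v1: "st v * v = p j" and v2: "v * st v = q (m j)"
        unfolding mvn_def by auto
      have ls2: "proj_lesssim st (q (Suc k)) (p j)"
        using transport[OF pq[of "Suc k"] chain_le[OF iq, of "Suc k" "m j"] v1 v2 pp[of j]]
          j Suc.prems mge[of j] by auto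
      have "\<exists>q'. is_proj st q' \<and> mvn st q' (q (Suc k)) \<and> proj_le (r k) q' \<and> proj_le q' (p j)"
        using part1[OF canc IH(1) pq[of "Suc k"] pp[of j] rk_le ls1 ls2] Suc.prems j by auto
      from someI_ex[OF this] show ?thesis using rs by (simp add: j_def)
    qed
  qed
  show ?thesis
  proof (intro exI conjI)
    show "incr_seq st M r" unfolding incr_seq_def
    proof
      show "\<forall>n\<in>{1..M}. is_proj st (r n)" using inv by auto
      show "\<forall>n. 1 \<le> n \<and> n < M \<longrightarrow> proj_le (r n) (r (Suc n))"
      proof (intro allI impI)
        fix n assume "1 \<le> n \<and> n < M"
        then have "Suc n \<le> M" by simp
        from inv[OF this] show "proj_le (r n) (r (Suc n))" by simp
      qed
    qed
    show "\<forall>k\<in>{1..M}. mvn st (r k) (q k)" using inv by auto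
    show "\<forall>n\<in>{1..N}. r (m n) = p n"
    proof
      fix n assume n: "n \<in> {1..N}"
      obtain k where k: "m n = Suc k" using mge[OF n] by (cases "m n") auto
      show "r (m n) = p n" using rSuc[of k] Jm[OF n] k by simp
    qed
  qed
qed

end

theorem lemma2p2:
  fixes sc :: "complex \<Rightarrow> 'a::{real_normed_algebra, banach} \<Rightarrow> 'a"
    and st :: "'a \<Rightarrow> 'a"
  assumes "cstar_algebra sc st"
    and "has_cancellation sc st"
  shows "(\<forall>p1 q p2. is_proj st p1 \<and> is_proj st q \<and> is_proj st p2 \<and> proj_le p1 p2
            \<and> proj_lesssim st p1 q \<and> proj_lesssim st q p2
            \<longrightarrow> (\<exists>q'. is_proj st q' \<and> mvn st q' q \<and> proj_le p1 q' \<and> proj_le q' p2))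
       \<and> (\<forall>(N::nat) (M::nat) p q (m::nat \<Rightarrow> nat).
            incr_seq st N p \<and> incr_seq st M q \<and> 1 \<le> N
            \<and> 1 \<le> m 1 \<and> (\<forall>n. 1 \<le> n \<and> n < N \<longrightarrow> m n < m (Suc n)) \<and> m N = M
            \<and> (\<forall>n\<in>{1..N}. mvn st (p n) (q (m n)))
            \<longrightarrow> (\<exists>r. incr_seq st M r \<and> (\<forall>k\<in>{1..M}. mvn st (r k) (q k))
                     \<and> (\<forall>n\<in>{1..N}. r (m n) = p n)))"
  using cstar_algebra.part1[OF assms(1) assms(2)] cstar_algebra.part2[OF assms(1) assms(2)]
  by blast

end
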